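(* Let $n\ge 2$ and let $G$ be a graph on $2n+1$ vertices with at least $n^2+n$ edges that contains no two distinct vertices of the same degree joined by a path of length three. Let $\beta$ be the largest integer such that $G$ contains two distinct vertices of degree $\beta$. Then $\beta\le n+1$. Moreover, if $\beta=n+1$, then $G$ is isomorphic to $K_{n,n+1}$.
   Context: A path of length three joining vertices $a$ and $b$ is a path $a\,x\,y\,b$ with four distinct vertices and three edges. Graphs are finite and simple. *)

theory Defs
  imports Main
begin

definition simple_graph :: "'a set \<Rightarrow> ('a \<Rightarrow> 'a \<Rightarrow> bool) \<Rightarrow> bool" where
  "simple_graph V E \<longleftrightarrow> finite V \<and> (\<forall>x y. E x y \<longrightarrow> x \<in> V \<and> y \<in> V)
     \<and> (\<forall>x y. E x y \<longrightarrow> E y x) \<and> (\<forall>x. \<not> E x x)"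

definition degree :: "'a set \<Rightarrow> ('a \<Rightarrow> 'a \<Rightarrow> bool) \<Rightarrow> 'a \<Rightarrow> nat" where
  "degree V E v = card {u \<in> V. E v u}"

definition edge_set :: "'a set \<Rightarrow> ('a \<Rightarrow> 'a \<Rightarrow> bool) \<Rightarrow> 'a set set" where
  "edge_set V E = {{x, y} | x y. x \<in> V \<and> y \<in> V \<and> E x y}"

definition path3 :: "('a \<Rightarrow> 'a \<Rightarrow> bool) \<Rightarrow> 'a \<Rightarrow> 'a \<Rightarrow> bool" where
  "path3 E a b \<longleftrightarrow> (\<exists>x y. distinct [a, x, y, b] \<and> E a x \<and> E x y \<and> E y b)"

definition graph_iso :: "'a set \<Rightarrow> ('a \<Rightarrow> 'a \<Rightarrow> bool) \<Rightarrow> 'b set \<Rightarrow> ('b \<Rightarrow> 'b \<Rightarrow> bool) \<Rightarrow> bool" where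
  "graph_iso V E W F \<longleftrightarrow> (\<exists>f. bij_betw f V W \<and> (\<forall>x\<in>V. \<forall>y\<in>V. E x y \<longleftrightarrow> F (f x) (f y)))"

definition Kbip_V :: "nat \<Rightarrow> nat \<Rightarrow> (nat + nat) set" where
  "Kbip_V m k = Inl ` {..<m} \<union> Inr ` {..<k}"

definition Kbip_E :: "(nat + nat) \<Rightarrow> (nat + nat) \<Rightarrow> bool" where
  "Kbip_E u v \<longleftrightarrow> (isl u \<noteq> isl v)"

end

theory Submission
  imports Defs
begin



lemma sg_facts:
  assumes "simple_graph V E"
  shows "finite V" "\<And>x y. E x y \<Longrightarrow> x \<in> V" "\<And>x y. E x y \<Longrightarrow> y \<in> V"
    "\<And>x y. E x y \<Longrightarrow> E y x" "\<And>x. \<not> E x x"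
  using assms unfolding simple_graph_def by blast+

lemma handshake:
  assumes G: "simple_graph V E"
  shows "2 * card (edge_set V E) = card {p \<in> V \<times> V. E (fst p) (snd p)}"
proof -
  note F = sg_facts[OF G]
  let ?A = "{p \<in> V \<times> V. E (fst p) (snd p)}"
  let ?B = "\<lambda>e. {p \<in> ?A. {fst p, snd p} = e}"
  have fin: "finite (edge_set V E)"
  proof (rule finite_subset)
    show "edge_set V E \<subseteq> Pow V" unfolding edge_set_def by auto
  qed (use F(1) in auto)
  have U: "?A = (\<Union>e\<in>edge_set V E. ?B e)"
  proof
    show "?A \<subseteq> (\<Union>e\<in>edge_set V E. ?B e)"
    proof
      fix p assume p: "p \<in> ?A"
      have "{fst p, snd p} \<in> edge_set V E" unfolding edge_set_def
        using p by (intro CollectI exI[of _ "fst p"] exI[of _ "snd p"]) auto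
      then show "p \<in> (\<Union>e\<in>edge_set V E. ?B e)"
        by (rule UN_I) (use p in simp)
    qed
  next
    show "(\<Union>e\<in>edge_set V E. ?B e) \<subseteq> ?A" by (rule UN_least) (rule Collect_subset)
  qed
  have c2: "card (?B e) = 2" if ein: "e \<in> edge_set V E" for e
  proof -
    obtain x y where e: "e = {x,y}" "x \<in> V" "y \<in> V" "E x y"
      using ein unfolding edge_set_def by blast
    have xy: "x \<noteq> y" using F(5) e(4) by metis
    have "?B e = {(x,y),(y,x)}"
    proof (intro equalityI subsetI)
      fix p assume p: "p \<in> ?B e"
      then have "{fst p, snd p} = {x,y}" using e(1) by blast
      then have "(fst p = x \<and> snd p = y) \<or> (fst p = y \<and> snd p = x)" by (simp add: doubleton_eq_iff)
      then show "p \<in> {(x,y),(y,x)}" by (cases p) auto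
    next
      fix p assume p: "p \<in> {(x,y),(y,x)}"
      have "E y x" using F(4)[OF e(4)] .
      then show "p \<in> ?B e" using p e by auto
    qed
    then show ?thesis using xy by simp
  qed
  have finA: "finite ?A" using F(1) by (auto intro: finite_subset[of _ "V \<times> V"])
  have "card ?A = card (\<Union>e\<in>edge_set V E. ?B e)" using arg_cong[OF U, of card] .
  also have "\<dots> = (\<Sum>e\<in>edge_set V E. card (?B e))"
  proof (rule card_UN_disjoint)
    show "\<forall>i\<in>edge_set V E. finite (?B i)" using finA by (auto intro: finite_subset[OF _ finA])
    show "\<forall>i\<in>edge_set V E. \<forall>j\<in>edge_set V E. i \<noteq> j \<longrightarrow> ?B i \<inter> ?B j = {}" by blast
  qed (rule fin)
  also have "\<dots> = (\<Sum>e\<in>edge_set V E. 2)" using c2 by simp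
  finally show ?thesis by simp
qed



lemma arith_nonadj:
  fixes b p c w m d n :: nat
  assumes h0: "2*(n^2+n) \<le> 4*b + 2*(p*(p-1)) + 4*p*w + 2*c*m + d*(d+1) + (w*w - m*m)"
   and md: "m + d = w" and bpc: "b = p + c" and cv: "2*n+1 = 2 + 2*p + c + w" and bn: "b \<ge> n+1"
  shows "b = n+1 \<and> p = 0 \<and> d = 0"
proof -
  have mw: "m \<le> w" using md by simp
  have e1: "int (w*w - m*m) = int w * int w - int m * int m"
    using mult_le_mono[OF mw mw] by (simp add: of_nat_diff)
  have e2: "int (p*(p-1)) = int p * (int p - 1)" by (cases p) (auto simp: algebra_simps)
  obtain pp ww where pw: "pp = p*(p-1)" "ww = w*w - m*m" by blast
  have h: "2*(n^2+n) \<le> 4*b + 2*pp + 4*p*w + 2*c*m + d*(d+1) + ww" using h0 pw by simp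
  have h1: "2*(int n^2 + int n) \<le> 4*int b + 2*int pp + 4*int p*int w + 2*int c*int m + int d*(int d+1) + int ww"
  proof -
    have "int (2*(n^2+n)) \<le> int (4*b + 2*pp + 4*p*w + 2*c*m + d*(d+1) + ww)"
      using h by (simp only: of_nat_le_iff)
    then show ?thesis by (simp add: algebra_simps)
  qed
  have e1': "int ww = int w * int w - int m * int m" using e1 pw by simp
  have e2': "int pp = int p * (int p - 1)" using e2 pw by simp
  define B N Pp Cc Wd M D where "B = int b" "N = int n" "Pp = int p" "Cc = int c" "Wd = int w"
    "M = int m" "D = int d"
  have h2: "2*(N^2+N) \<le> 4*B + 2*(Pp*(Pp-1)) + 4*Pp*Wd + 2*Cc*M + D*(D+1) + (Wd*Wd - M*M)"
    using h1 e1' e2' unfolding B_N_Pp_Cc_Wd_M_D_def by simp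
  have s1: "M = Wd - D" "B = Pp + Cc" "Wd = 2*N - 1 - 2*Pp - Cc"
    using md bpc cv unfolding B_N_Pp_Cc_Wd_M_D_def by linarith+
  have id: "4*B + 2*(Pp*(Pp-1)) + 4*Pp*Wd + 2*Cc*M + D*(D+1) + (Wd*Wd - M*M) - 2*(N^2+N)
     = -2*(B-N)*(B-N-1) - 2*Pp*(2*B+2-2*N) - D*(2*Cc-2*Wd-1)"
    unfolding s1 by (simp add: algebra_simps power2_eq_square)
  have key: "2*(B-N)*(B-N-1) + 2*Pp*(2*B+2-2*N) + D*(2*Cc-2*Wd-1) \<le> 0"
    using h2 id by linarith
  have g1: "B - N \<ge> 1" using bn unfolding B_N_Pp_Cc_Wd_M_D_def by linarith
  have g2: "2*Cc - 2*Wd - 1 \<ge> 5" using s1 g1 by linarith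
  have g3: "2*B+2-2*N \<ge> 4" using g1 by linarith
  have P0: "Pp \<ge> 0" "D \<ge> 0" unfolding B_N_Pp_Cc_Wd_M_D_def by simp_all
  have t1: "2*(B-N)*(B-N-1) \<ge> 0" using g1 by simp
  have t2: "2*Pp*(2*B+2-2*N) \<ge> 0" using g3 P0 by simp
  have t3: "D*(2*Cc-2*Wd-1) \<ge> 0" using g2 P0 by simp
  have z1: "(B-N)*(B-N-1) = 0" using key t1 t2 t3 by linarith
  have z2: "Pp*(2*B+2-2*N) = 0" using key t1 t2 t3 by linarith
  have z3: "D*(2*Cc-2*Wd-1) = 0" using key t1 t2 t3 by linarith
  have "B - N - 1 = 0" using z1 g1 by simp
  moreover have "Pp = 0" using z2 g3 by simp
  moreover have "D = 0" using z3 g2 by simp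
  ultimately show ?thesis unfolding B_N_Pp_Cc_Wd_M_D_def by simp
qed




lemma card_Union_list_le: "card (\<Union> (set Rs)) \<le> sum_list (map card Rs)"
proof (induction Rs)
  case (Cons R Rs)
  then show ?case using card_Un_le[of R "\<Union> (set Rs)"] by simp
qed simp

locale pairsetup =
  fixes V :: "'a set" and E :: "'a \<Rightarrow> 'a \<Rightarrow> bool" and u v :: 'a
  assumes G: "simple_graph V E" and uV: "u \<in> V" and vV: "v \<in> V" and uv: "u \<noteq> v"
    and cross: "\<And>x y. E u x \<Longrightarrow> x \<noteq> v \<Longrightarrow> E v y \<Longrightarrow> y \<noteq> u \<Longrightarrow> x \<noteq> y \<Longrightarrow> \<not> E x y"
begin

lemma finV: "finite V" and inV1: "E x y \<Longrightarrow> x \<in> V" and inV2: "E x y \<Longrightarrow> y \<in> V"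
  and sym: "E x y \<Longrightarrow> E y x" and irr: "\<not> E x x"
  using G unfolding simple_graph_def by blast+

definition "X = {x\<in>V. E u x} - {v}"
definition "Y = {x\<in>V. E v x} - {u}"
definition "C = X \<inter> Y"
definition "P = X - Y"
definition "Q = Y - X"
definition "W = V - {u,v} - X - Y"
definition "A2 = {p \<in> V \<times> V. E (fst p) (snd p)}"
definition "S c = {y\<in>W. E c y}"
definition "s c = card (S c)"

lemmas defs = X_def Y_def C_def P_def Q_def W_def

lemma subs: "X \<subseteq> V" "Y \<subseteq> V" "C \<subseteq> V" "P \<subseteq> V" "Q \<subseteq> V" "W \<subseteq> V" "S c \<subseteq> W"
  unfolding defs S_def by auto

lemma fins: "finite X" "finite Y" "finite C" "finite P" "finite Q" "finite W" "finite (S c)"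
  "finite A2"
proof -
  show "finite X" "finite Y" "finite C" "finite P" "finite Q" "finite W"
    using subs(1-6) finV by (auto intro: finite_subset)
  then show "finite (S c)" using subs(7) finite_subset by blast
  show "finite A2" unfolding A2_def using finV by (auto intro: finite_subset[of _ "V \<times> V"])
qed

lemma notin: "u \<notin> X" "u \<notin> Y" "v \<notin> X" "v \<notin> Y" "u \<notin> W" "v \<notin> W"
  unfolding defs using irr by auto

lemma crossXY: "x \<in> X \<Longrightarrow> y \<in> Y \<Longrightarrow> x \<noteq> y \<Longrightarrow> \<not> E x y"
  unfolding X_def Y_def using cross by auto

lemma cardX: "card X = card P + card C"
proof -
  have "X = P \<union> C" "P \<inter> C = {}" unfolding defs by auto
  then show ?thesis using card_Un_disjoint[OF fins(4) fins(3)] by simp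
qed

lemma cardY: "card Y = card Q + card C"
proof -
  have "Y = Q \<union> C" "Q \<inter> C = {}" unfolding defs by auto
  then show ?thesis using card_Un_disjoint[OF fins(5) fins(3)] by simp
qed

lemma cardV: "card V = 2 + card P + card Q + card C + card W"
proof -
  have e: "V = {u,v} \<union> (P \<union> (Q \<union> (C \<union> W)))" using uV vV unfolding defs by auto
  have d1: "C \<inter> W = {}" "Q \<inter> (C \<union> W) = {}" "P \<inter> (Q \<union> (C \<union> W)) = {}"
    "{u,v} \<inter> (P \<union> (Q \<union> (C \<union> W))) = {}" unfolding defs using irr by auto
  have "card (C \<union> W) = card C + card W"
    using card_Un_disjoint[OF fins(3) fins(6) d1(1)] .
  moreover have "card (Q \<union> (C \<union> W)) = card Q + card (C \<union> W)"
    using card_Un_disjoint[OF fins(5) _ d1(2)] fins by simp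
  moreover have "card (P \<union> (Q \<union> (C \<union> W))) = card P + card (Q \<union> (C \<union> W))"
    using card_Un_disjoint[OF fins(4) _ d1(3)] fins by simp
  moreover have "card ({u,v} \<union> (P \<union> (Q \<union> (C \<union> W)))) = card {u,v} + card (P \<union> (Q \<union> (C \<union> W)))"
    using card_Un_disjoint[OF _ _ d1(4)] fins by simp
  ultimately show ?thesis using e uv by simp
qed

lemma cardNu: "card {x\<in>V. E u x} = card X + (if E u v then 1 else 0)"
proof (cases "E u v")
  case True
  then have "{x\<in>V. E u x} = insert v X" using vV unfolding X_def by auto
  then show ?thesis using True fins notin by simp
next
  case False
  then have "{x\<in>V. E u x} = X" unfolding X_def by auto
  then show ?thesis using False by simp
qed

lemma cardNv: "card {x\<in>V. E v x} = card Y + (if E u v then 1 else 0)"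
proof (cases "E u v")
  case True
  then have "{x\<in>V. E v x} = insert u Y" using uV sym unfolding Y_def by auto
  then show ?thesis using True fins notin by simp
next
  case False
  then have "{x\<in>V. E v x} = Y" using sym unfolding Y_def by auto
  then show ?thesis using False by simp
qed

lemma C_nbrs: "c \<in> C \<Longrightarrow> {y\<in>V. E c y} = {u,v} \<union> S c"
proof -
  assume c: "c \<in> C"
  then have cX: "c \<in> X" and cY: "c \<in> Y" unfolding C_def by auto
  show ?thesis
  proof
    show "{y\<in>V. E c y} \<subseteq> {u,v} \<union> S c"
    proof
      fix y assume y: "y \<in> {y\<in>V. E c y}"
      have "y \<notin> X"
      proof
        assume "y \<in> X"
        then show False using crossXY[of y c] cY y sym irr by blast
      qed
      moreover have "y \<notin> Y" using crossXY[of c y] cX y irr by blast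
      ultimately show "y \<in> {u,v} \<union> S c" using y unfolding S_def W_def by auto
    qed
  next
    show "{u,v} \<union> S c \<subseteq> {y\<in>V. E c y}"
      using cX cY uV vV sym subs unfolding X_def Y_def S_def by auto
  qed
qed

lemma deg_C: "c \<in> C \<Longrightarrow> degree V E c = 2 + s c"
proof -
  assume c: "c \<in> C"
  have "card ({u,v} \<union> S c) = card {u,v} + card (S c)"
    by (rule card_Un_disjoint) (use fins subs(7)[of c] notin in auto)
  then show ?thesis unfolding degree_def C_nbrs[OF c] s_def using uv by simp
qed

lemma s_le: "s c \<le> card W"
  unfolding s_def using subs fins card_mono by metis

lemma offdiag: "finite D \<Longrightarrow> card (A2 \<inter> D \<times> D) \<le> card D * (card D - 1)"
proof -
  assume D: "finite D"
  have "A2 \<inter> D \<times> D \<subseteq> Sigma D (\<lambda>a. D - {a})" unfolding A2_def using irr by auto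
  then have "card (A2 \<inter> D \<times> D) \<le> card (Sigma D (\<lambda>a. D - {a}))"
    by (rule card_mono[rotated]) (use D in auto)
  also have "\<dots> = (\<Sum>a\<in>D. card (D - {a}))" using D by simp
  also have "\<dots> = card D * (card D - 1)" using D by simp
  finally show ?thesis .
qed

end


context pairsetup begin
lemma count:
  "card A2 \<le> card {x\<in>V. E u x} + card {x\<in>V. E v x} + card X + card Y
     + card P * (card P - 1) + card Q * (card Q - 1) + 2 * card P * card W + 2 * card Q * card W
     + 2 * (\<Sum>c\<in>C. s c) + card (A2 \<inter> W \<times> W)"
proof -
  define Rs where "Rs = [Pair u ` {x\<in>V. E u x}, Pair v ` {x\<in>V. E v x},
     (\<lambda>x. (x,u)) ` X, (\<lambda>x. (x,v)) ` Y, A2 \<inter> P \<times> P, A2 \<inter> Q \<times> Q,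
     P \<times> W, W \<times> P, Q \<times> W, W \<times> Q, Sigma C S, (\<lambda>(a,b). (b,a)) ` Sigma C S, A2 \<inter> W \<times> W]"
  have cov: "A2 \<subseteq> \<Union> (set Rs)"
  proof
    fix arc0 assume arc0: "arc0 \<in> A2"
    obtain a b where ab: "arc0 = (a,b)" by fastforce
    have a: "a \<in> V" and b: "b \<in> V" and e: "E a b" using arc0 ab unfolding A2_def by auto
    have ab_ne: "a \<noteq> b" using e irr by metis
    have mem: "\<And>R. R \<in> set Rs \<Longrightarrow> arc0 \<in> R \<Longrightarrow> arc0 \<in> \<Union> (set Rs)" by blast
    consider "a = u" | "a = v" | "b = u" "a \<noteq> v" | "b = v" "a \<noteq> u" | "a \<noteq> u" "a \<noteq> v" "b \<noteq> u" "b \<noteq> v"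
      by blast
    then show "arc0 \<in> \<Union> (set Rs)"
    proof cases
      case 1
      then show ?thesis using b e by (intro mem[of "Pair u ` {x\<in>V. E u x}"]) (auto simp: Rs_def ab)
    next
      case 2
      then show ?thesis using b e by (intro mem[of "Pair v ` {x\<in>V. E v x}"]) (auto simp: Rs_def ab)
    next
      case 3
      then have "a \<in> X" using a e sym unfolding X_def by auto
      then show ?thesis using 3 by (intro mem[of "(\<lambda>x. (x,u)) ` X"]) (auto simp: Rs_def ab)
    next
      case 4
      then have "a \<in> Y" using a e sym unfolding Y_def by auto
      then show ?thesis using 4 by (intro mem[of "(\<lambda>x. (x,v)) ` Y"]) (auto simp: Rs_def ab)
    next
      case 5
      note nuv = 5
      have r1: "a \<in> X \<Longrightarrow> b \<notin> Y" using crossXY[of a b] e ab_ne by blast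
      have r2: "a \<in> Y \<Longrightarrow> b \<notin> X" using crossXY[of b a] e ab_ne sym by blast
      have aW: "a \<notin> X \<Longrightarrow> a \<notin> Y \<Longrightarrow> a \<in> W" using a nuv unfolding W_def by auto
      have bW: "b \<notin> X \<Longrightarrow> b \<notin> Y \<Longrightarrow> b \<in> W" using b nuv unfolding W_def by auto
      have "(a \<in> P \<and> b \<in> P) \<or> (a \<in> Q \<and> b \<in> Q) \<or> (a \<in> P \<and> b \<in> W) \<or> (a \<in> W \<and> b \<in> P)
        \<or> (a \<in> Q \<and> b \<in> W) \<or> (a \<in> W \<and> b \<in> Q) \<or> (a \<in> C \<and> b \<in> W) \<or> (a \<in> W \<and> b \<in> C)
        \<or> (a \<in> W \<and> b \<in> W)"
        using r1 r2 aW bW unfolding P_def Q_def C_def by blast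
      then show ?thesis
      proof (elim disjE conjE)
        assume "a \<in> P" "b \<in> P" then show ?thesis using arc0 by (intro mem[of "A2 \<inter> P \<times> P"]) (auto simp: Rs_def ab)
      next
        assume "a \<in> Q" "b \<in> Q" then show ?thesis using arc0 by (intro mem[of "A2 \<inter> Q \<times> Q"]) (auto simp: Rs_def ab)
      next
        assume "a \<in> P" "b \<in> W" then show ?thesis by (intro mem[of "P \<times> W"]) (auto simp: Rs_def ab)
      next
        assume "a \<in> W" "b \<in> P" then show ?thesis by (intro mem[of "W \<times> P"]) (auto simp: Rs_def ab)
      next
        assume "a \<in> Q" "b \<in> W" then show ?thesis by (intro mem[of "Q \<times> W"]) (auto simp: Rs_def ab)
      next
        assume "a \<in> W" "b \<in> Q" then show ?thesis by (intro mem[of "W \<times> Q"]) (auto simp: Rs_def ab)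
      next
        assume "a \<in> C" "b \<in> W" then show ?thesis using e by (intro mem[of "Sigma C S"]) (auto simp: Rs_def ab S_def)
      next
        assume "a \<in> W" "b \<in> C"
        then have "(b,a) \<in> Sigma C S" using e sym by (auto simp: S_def)
        then have "arc0 \<in> (\<lambda>(a,b). (b,a)) ` Sigma C S" unfolding ab by force
        then show ?thesis by (intro mem[of "(\<lambda>(a,b). (b,a)) ` Sigma C S"]) (auto simp: Rs_def)
      next
        assume "a \<in> W" "b \<in> W" then show ?thesis using arc0 by (intro mem[of "A2 \<inter> W \<times> W"]) (auto simp: Rs_def ab)
      qed
    qed
  qed
  have "card A2 \<le> card (\<Union> (set Rs))"
    by (rule card_mono[OF _ cov]) (simp add: Rs_def fins finV)
  also have "\<dots> \<le> sum_list (map card Rs)" by (rule card_Union_list_le)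
  also have "\<dots> \<le> card {x\<in>V. E u x} + card {x\<in>V. E v x} + card X + card Y
     + card P * (card P - 1) + card Q * (card Q - 1) + 2 * card P * card W + 2 * card Q * card W
     + 2 * (\<Sum>c\<in>C. s c) + card (A2 \<inter> W \<times> W)"
  proof -
    have sig: "card (Sigma C S) = (\<Sum>c\<in>C. s c)" using fins unfolding s_def by simp
    have "card ((\<lambda>(a,b). (b,a)) ` Sigma C S) \<le> card (Sigma C S)"
      by (rule card_image_le) (use fins in simp)
    moreover have "card (Pair u ` {x\<in>V. E u x}) \<le> card {x\<in>V. E u x}"
      by (rule card_image_le) (use finV in simp)
    moreover have "card (Pair v ` {x\<in>V. E v x}) \<le> card {x\<in>V. E v x}"
      by (rule card_image_le) (use finV in simp)
    moreover have "card ((\<lambda>x. (x,u)) ` X) \<le> card X" by (rule card_image_le) (use fins in simp)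
    moreover have "card ((\<lambda>x. (x,v)) ` Y) \<le> card Y" by (rule card_image_le) (use fins in simp)
    moreover have "card (A2 \<inter> P \<times> P) \<le> card P * (card P - 1)" using offdiag fins by blast
    moreover have "card (A2 \<inter> Q \<times> Q) \<le> card Q * (card Q - 1)" using offdiag fins by blast
    ultimately show ?thesis unfolding Rs_def using sig by (simp add: card_cartesian_product)
  qed
  finally show ?thesis .
qed

end



lemma sum_distinct_bound:
  fixes f :: "'b \<Rightarrow> nat"
  assumes "finite T" "inj_on f T" "\<forall>x\<in>T. f x \<le> d"
  shows "2 * (\<Sum>x\<in>T. f x) \<le> d*(d+1)"
proof -
  have "(\<Sum>x\<in>T. f x) = (\<Sum>y\<in>f ` T. y)" using sum.reindex[OF assms(2), of id] by simp
  also have "\<dots> \<le> (\<Sum>y\<in>{0..d}. y)"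
    by (rule sum_mono2) (use assms(3) in auto)
  also have "\<dots> = d * Suc d div 2" using gauss_sum_nat by simp
  finally show ?thesis by simp
qed

lemma iso_lemma:
  assumes fin: "finite V" and CV: "Cs \<subseteq> V" and c1: "card (V - Cs) = n" and c2: "card Cs = n + 1"
    and e: "\<forall>a\<in>V. \<forall>b\<in>V. E a b \<longleftrightarrow> (a \<in> Cs) \<noteq> (b \<in> Cs)"
  shows "graph_iso V E (Kbip_V n (n+1)) Kbip_E"
proof -
  obtain g1 where g1: "bij_betw g1 (V - Cs) {0..<n}"
    using ex_bij_betw_finite_nat[of "V - Cs"] fin c1 by auto
  obtain g2 where g2: "bij_betw g2 Cs {0..<n+1}"
    using ex_bij_betw_finite_nat[of Cs] fin CV c2 finite_subset by metis
  define f where "f x = (if x \<in> Cs then Inr (g2 x) else Inl (g1 x))" for x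
  have inj: "inj_on f V"
  proof
    fix x y assume x: "x \<in> V" and y: "y \<in> V" and fxy: "f x = f y"
    show "x = y"
    proof (cases "x \<in> Cs")
      case True
      then have "y \<in> Cs" using fxy unfolding f_def by (auto split: if_splits)
      then show ?thesis using True fxy g2 unfolding f_def bij_betw_def inj_on_def by auto
    next
      case False
      then have "y \<notin> Cs" using fxy unfolding f_def by (auto split: if_splits)
      then show ?thesis using False x y fxy g1 unfolding f_def bij_betw_def inj_on_def by auto
    qed
  qed
  have "f ` V = f ` (V - Cs) \<union> f ` Cs" using CV by blast
  also have "f ` (V - Cs) = Inl ` (g1 ` (V - Cs))" unfolding f_def by (auto simp: image_iff)
  also have "f ` Cs = Inr ` (g2 ` Cs)" unfolding f_def by (auto simp: image_iff)
  also have "Inl ` (g1 ` (V - Cs)) \<union> Inr ` (g2 ` Cs) = Kbip_V n (n+1)"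
    using g1 g2 unfolding bij_betw_def Kbip_V_def by (simp add: atLeast0LessThan)
  finally have img: "f ` V = Kbip_V n (n+1)" .
  have "\<forall>x\<in>V. \<forall>y\<in>V. E x y \<longleftrightarrow> Kbip_E (f x) (f y)"
    using e unfolding Kbip_E_def f_def by auto
  then show ?thesis unfolding graph_iso_def bij_betw_def using inj img by blast
qed

lemma arith_adj:
  fixes k p c w n pp SSS AW :: nat
  assumes h: "2*(n^2+n) \<le> 4*k + 2 + 2*pp + 4*p*w + SSS + AW"
    and e1: "int pp = int p*(int p - 1)" and s2: "SSS \<le> w*(w+1)" and aw: "int AW \<le> int w * (int w - 1)"
    and kpc: "k = p + c" and cw: "c \<le> w+1" and cv: "2*n+1 = 2+2*p+c+w" and kn: "k \<ge> n" and n2: "n \<ge> 2"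
  shows "p = 0 \<and> k = n \<and> c = w + 1"
proof -
  have k: "k = n" "c = w + 1" using kpc cw cv kn by linarith+
  have h1: "2*(int n^2 + int n) \<le> 4*int k + 2 + 2*int pp + 4*int p*int w + int SSS + int AW"
  proof -
    have "int (2*(n^2+n)) \<le> int (4*k + 2 + 2*pp + 4*p*w + SSS + AW)"
      using h by (simp only: of_nat_le_iff)
    then show ?thesis by (simp add: algebra_simps)
  qed
  have s2': "int SSS \<le> int w * (int w + 1)"
  proof -
    have "int SSS \<le> int (w*(w+1))" using s2 by (simp only: of_nat_le_iff)
    then show ?thesis by (simp add: algebra_simps)
  qed
  have nn: "int n = int p + int w + 1" using k kpc by simp
  have "2*(int n^2 + int n) \<le> 4*int n + 2 + 2*(int p*(int p - 1)) + 4*int p*int w + int w * (int w + 1) + int w * (int w - 1)"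
    using h1 e1 s2' aw k by simp
  then have "2*(int n^2 + int n) \<le> 2 * int n^2 + 4 - 2 * int p"
    unfolding nn by (simp add: algebra_simps power2_eq_square)
  then have "int n + int p \<le> 2" by simp
  then have "p = 0" using n2 by simp
  then show ?thesis using k by simp
qed




context pairsetup begin

lemma sumC_le: "(\<Sum>x\<in>C. s x) \<le> card C * card W"
proof -
  have "(\<Sum>x\<in>C. s x) \<le> (\<Sum>x\<in>C. card W)" by (rule sum_mono) (rule s_le)
  then show ?thesis by simp
qed

lemma adj:
  assumes eE: "E u v" and n2: "n \<ge> 2" and cV: "card V = 2*n+1" and cE: "2*(n^2+n) \<le> card A2"
    and dX: "card X + 1 = \<beta>" and dY: "card Y + 1 = \<beta>" and bge: "\<beta> \<ge> n+1"
    and noP3: "\<And>a b. a\<in>V \<Longrightarrow> b\<in>V \<Longrightarrow> a\<noteq>b \<Longrightarrow> degree V E a = degree V E b \<Longrightarrow> \<not> path3 E a b"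
  shows False
proof -
  define p c w k where "p = card P" "c = card C" "w = card W" "k = card X"
  have pq: "card Q = p" using cardX cardY dX dY unfolding p_c_w_k_def by simp
  have kpc: "k = p + c" using cardX unfolding p_c_w_k_def by simp
  have cv: "2*n+1 = 2+2*p+c+w" using cardV cV pq unfolding p_c_w_k_def by simp
  have CX: "C \<subseteq> X" "C \<subseteq> Y" unfolding C_def by auto
  have inj: "inj_on s C"
  proof
    fix a b assume a: "a \<in> C" and b: "b \<in> C" and sab: "s a = s b"
    show "a = b"
    proof (rule ccontr)
      assume ab: "a \<noteq> b"
      have dg: "degree V E a = degree V E b" using deg_C[OF a] deg_C[OF b] sab by simp
      have aX: "a \<in> X" and bY: "b \<in> Y" using a b CX by auto
      have "path3 E a b" unfolding path3_def
      proof (intro exI conjI)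
        show "distinct [a, u, v, b]" using aX bY notin ab uv by auto
        show "E a u" using aX sym unfolding X_def by auto
        show "E u v" by fact
        show "E v b" using bY unfolding Y_def by auto
      qed
      then show False using noP3[OF _ _ ab dg] a b subs by auto
    qed
  qed
  have sC: "s ` C \<subseteq> {0..w}" using s_le unfolding p_c_w_k_def by auto
  have cimg: "card (s ` C) = c" using card_image[OF inj] unfolding p_c_w_k_def by simp
  have cw: "c \<le> w + 1" using card_mono[OF _ sC] cimg by simp
  have S2: "2 * (\<Sum>x\<in>C. s x) \<le> w*(w+1)"
    by (rule sum_distinct_bound) (use fins inj s_le in \<open>auto simp: p_c_w_k_def\<close>)
  have AW: "card (A2 \<inter> W \<times> W) \<le> w * (w - 1)" using offdiag fins unfolding p_c_w_k_def by blast
  have cnt: "card A2 \<le> (k+1) + (k+1) + k + k + p*(p-1) + p*(p-1) + 2*p*w + 2*p*w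
      + 2 * (\<Sum>x\<in>C. s x) + card (A2 \<inter> W \<times> W)"
    using count cardNu cardNv eE pq dX dY unfolding p_c_w_k_def by simp
  have "p = 0 \<and> k = n \<and> c = w + 1"
  proof (rule arith_adj[where pp = "p*(p-1)" and SSS = "2 * (\<Sum>x\<in>C. s x)" and AW = "card (A2 \<inter> W \<times> W)"])
    show "2*(n^2+n) \<le> 4*k + 2 + 2*(p*(p-1)) + 4*p*w + 2 * (\<Sum>x\<in>C. s x) + card (A2 \<inter> W \<times> W)"
      using cE cnt by linarith
    show "int (p*(p-1)) = int p*(int p - 1)" by (cases p) (auto simp: algebra_simps)
    show "int (card (A2 \<inter> W \<times> W)) \<le> int w * (int w - 1)"
    proof -
      have "int (card (A2 \<inter> W \<times> W)) \<le> int (w * (w-1))" using AW by (simp only: of_nat_le_iff)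
      then show ?thesis by (cases w) (auto simp: algebra_simps)
    qed
  qed (use S2 kpc cw cv dX bge n2 p_c_w_k_def in auto)
  then have p0: "p = 0" and kn: "k = n" and cw1: "c = w + 1" by auto
  have "s ` C = {0..w}"
    by (rule card_subset_eq) (use sC cimg cw1 in auto)
  then obtain c0 where c0: "c0 \<in> C" "s c0 = w" by (metis atLeastAtMost_iff image_iff order_refl zero_le)
  have "card C \<ge> 2" using kn kpc p0 n2 unfolding p_c_w_k_def by simp
  then have "card (C - {c0}) \<ge> 1" using c0 fins by simp
  then obtain c' where c': "c' \<in> C" "c' \<noteq> c0" by (metis Diff_iff card_0_eq fins(3) finite_Diff not_one_le_zero singletonI subsetI subset_empty)
  have dg: "degree V E u = degree V E c0"
    using deg_C[OF c0(1)] c0 cardNu eE kn kpc p0 cw1 unfolding degree_def p_c_w_k_def by simp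
  have c0X: "c0 \<in> X" "c0 \<in> Y" and c'X: "c' \<in> X" "c' \<in> Y" using c0 c' CX by auto
  have "path3 E u c0" unfolding path3_def
  proof (intro exI conjI)
    show "distinct [u, c', v, c0]" using c0X c'X c' notin uv by auto
    show "E u c'" using c'X unfolding X_def by auto
    show "E c' v" using c'X sym unfolding Y_def by auto
    show "E v c0" using c0X unfolding Y_def by auto
  qed
  moreover have "u \<noteq> c0" using c0X notin by auto
  ultimately show False using noP3[OF uV _ _ dg] c0X subs by auto
qed

end



context pairsetup begin

lemma nonadj:
  assumes nE: "\<not> E u v" and n2: "n \<ge> 2" and cV: "card V = 2*n+1" and cE: "2*(n^2+n) \<le> card A2"
    and dX: "card X = \<beta>" and dY: "card Y = \<beta>" and bge: "\<beta> \<ge> n+1"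
    and noP3: "\<And>a b. a\<in>V \<Longrightarrow> b\<in>V \<Longrightarrow> a\<noteq>b \<Longrightarrow> degree V E a = degree V E b \<Longrightarrow> \<not> path3 E a b"
  shows "\<beta> = n+1 \<and> graph_iso V E (Kbip_V n (n+1)) Kbip_E"
proof -
  define p c w where "p = card P" "c = card C" "w = card W"
  have pq: "card Q = p" using cardX cardY dX dY unfolding p_c_w_def by simp
  have bpc: "\<beta> = p + c" using cardX dX unfolding p_c_w_def by simp
  have cv: "2*n+1 = 2+2*p+c+w" using cardV cV pq unfolding p_c_w_def by simp
  have cw3: "c \<ge> w + 3" using bpc cv bge by linarith
  have CX: "C \<subseteq> X" "C \<subseteq> Y" unfolding C_def by auto
  have sW: "\<And>x. s x \<le> w" using s_le unfolding p_c_w_def by auto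
  have "\<not> inj_on s C"
  proof
    assume inj: "inj_on s C"
    have "s ` C \<subseteq> {0..w}" using sW by auto
    then have "card (s ` C) \<le> w + 1" using card_mono[of "{0..w}"] by fastforce
    moreover have "card (s ` C) = c" using card_image[OF inj] unfolding p_c_w_def by simp
    ultimately show False using cw3 by linarith
  qed
  then obtain c1 c2 where c12: "c1 \<in> C" "c2 \<in> C" "c1 \<noteq> c2" "s c1 = s c2"
    unfolding inj_on_def by blast
  define R where "R = {k. \<exists>a\<in>C. \<exists>b\<in>C. a \<noteq> b \<and> s a = k \<and> s b = k}"
  have Rfin: "finite R"
    by (rule finite_subset[of _ "{0..w}"]) (use sW in \<open>auto simp: R_def\<close>)
  have Rne: "s c1 \<in> R" using c12 unfolding R_def by auto
  define m where "m = Max R"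
  have "m \<in> R" using Max_in[OF Rfin] Rne unfolding m_def by blast
  then obtain a1 a2 where a: "a1 \<in> C" "a2 \<in> C" "a1 \<noteq> a2" "s a1 = m" "s a2 = m"
    unfolding R_def by blast
  have mmax: "\<And>a b. a \<in> C \<Longrightarrow> b \<in> C \<Longrightarrow> a \<noteq> b \<Longrightarrow> s a = s b \<Longrightarrow> s a \<le> m"
    unfolding m_def by (rule Max_ge[OF Rfin]) (auto simp: R_def)
  have mw: "m \<le> w" using a sW by metis
  define d where "d = w - m"
  define T where "T = {x\<in>C. s x > m}"
  have TC: "T \<subseteq> C" unfolding T_def by auto
  have injT: "inj_on (\<lambda>x. s x - m) T"
  proof
    fix x y assume x: "x \<in> T" and y: "y \<in> T" and e: "s x - m = s y - m"
    then have sxy: "s x = s y" unfolding T_def by auto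
    show "x = y"
    proof (rule ccontr)
      assume "x \<noteq> y"
      then have "s x \<le> m" using mmax[of x y] x y sxy TC by auto
      then show False using x unfolding T_def by auto
    qed
  qed
  have sumT: "2 * (\<Sum>x\<in>T. s x - m) \<le> d*(d+1)"
  proof (rule sum_distinct_bound)
    show "finite T" using fins TC finite_subset by blast
    show "\<forall>x\<in>T. s x - m \<le> d" unfolding d_def using sW diff_le_mono by blast
  qed (rule injT)
  have sumC: "(\<Sum>x\<in>C. s x) \<le> c*m + (\<Sum>x\<in>T. s x - m)"
  proof -
    have "(\<Sum>x\<in>C. s x) \<le> (\<Sum>x\<in>C. m + (s x - m))" by (rule sum_mono) simp
    also have "\<dots> = c*m + (\<Sum>x\<in>C. s x - m)" by (simp add: sum.distrib p_c_w_def)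
    also have "(\<Sum>x\<in>C. s x - m) = (\<Sum>x\<in>T. s x - m)"
      by (rule sum.mono_neutral_right) (use fins TC in \<open>auto simp: T_def\<close>)
    finally show ?thesis .
  qed
  have AWb: "card (A2 \<inter> W \<times> W) \<le> w*w - m*m"
  proof -
    have sub: "A2 \<inter> W \<times> W \<subseteq> W \<times> W - S a1 \<times> S a2"
    proof
      fix arc0 assume arc0: "arc0 \<in> A2 \<inter> W \<times> W"
      obtain x y where xy: "arc0 = (x,y)" by fastforce
      have x: "x \<in> W" and y: "y \<in> W" and e: "E x y" using arc0 xy unfolding A2_def by auto
      have "(x,y) \<notin> S a1 \<times> S a2"
      proof
        assume "(x,y) \<in> S a1 \<times> S a2"
        then have e1: "E a1 x" and e2: "E a2 y" unfolding S_def by auto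
        have dg: "degree V E a1 = degree V E a2" using deg_C a by simp
        have aW: "a1 \<notin> W" "a2 \<notin> W" using a CX unfolding W_def by auto
        have "path3 E a1 a2" unfolding path3_def
        proof (intro exI conjI)
          show "distinct [a1, x, y, a2]" using aW x y a(3) e irr by auto
          show "E a1 x" by fact
          show "E x y" by fact
          show "E y a2" using e2 sym by blast
        qed
        then show False using noP3[OF _ _ a(3) dg] a subs by auto
      qed
      then show "arc0 \<in> W \<times> W - S a1 \<times> S a2" using x y xy by auto
    qed
    have "card (A2 \<inter> W \<times> W) \<le> card (W \<times> W - S a1 \<times> S a2)"
      by (rule card_mono[OF _ sub]) (use fins in simp)
    also have "\<dots> = card (W \<times> W) - card (S a1 \<times> S a2)"
      by (rule card_Diff_subset) (use fins subs(7)[of a1] subs(7)[of a2] in \<open>auto intro: finite_cartesian_product\<close>)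
    also have "\<dots> = w*w - m*m" using a unfolding card_cartesian_product s_def p_c_w_def by simp
    finally show ?thesis .
  qed
  have cnt: "card A2 \<le> \<beta> + \<beta> + \<beta> + \<beta> + p*(p-1) + p*(p-1) + 2*p*w + 2*p*w
      + 2 * (\<Sum>x\<in>C. s x) + card (A2 \<inter> W \<times> W)"
    using count cardNu cardNv nE pq dX dY unfolding p_c_w_def by simp
  have "\<beta> = n+1 \<and> p = 0 \<and> d = 0"
  proof (rule arith_nonadj[where m = m and w = w and c = c])
    show "2*(n^2+n) \<le> 4*\<beta> + 2*(p*(p-1)) + 4*p*w + 2*c*m + d*(d+1) + (w*w - m*m)"
      using cE cnt sumT sumC AWb by linarith
  qed (use mw bpc cv bge d_def in auto)
  then have b1: "\<beta> = n+1" and p0: "p = 0" and d0: "d = 0" by auto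
  have mw': "m = w" using d0 mw d_def by simp
  have AW0: "A2 \<inter> W \<times> W = {}"
  proof -
    have "card (A2 \<inter> W \<times> W) = 0" using AWb mw' by simp
    then show ?thesis using fins by (auto intro: finite_subset)
  qed
  have c1': "c = n + 1" using b1 bpc p0 by simp
  have wn: "w + 2 = n" using cv c1' p0 by simp
  have sumge: "(\<Sum>x\<in>C. s x) \<ge> c * w"
  proof -
    have "2*(n^2+n) \<le> 4*(n+1) + 2 * (\<Sum>x\<in>C. s x)" using cE cnt b1 p0 AW0 by simp
    then have "2*((w+2)^2+(w+2)) \<le> 4*(w+3) + 2 * (\<Sum>x\<in>C. s x)" using wn by simp
    then have "2*(w*w + 3*w) \<le> 2 * (\<Sum>x\<in>C. s x)" by (simp add: algebra_simps power2_eq_square)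
    then have i1: "w*w + 3*w \<le> (\<Sum>x\<in>C. s x)" by simp
    have "c = w + 3" using c1' wn by simp
    then have "c * w = w*w + 3*w" by (simp add: algebra_simps)
    then show ?thesis using i1 by simp
  qed
  have allw: "\<forall>x\<in>C. s x = w"
  proof (rule ccontr)
    assume "\<not> (\<forall>x\<in>C. s x = w)"
    then obtain x0 where "x0 \<in> C" "s x0 < w" using sW le_neq_implies_less by blast
    then have "(\<Sum>x\<in>C. s x) < (\<Sum>x\<in>C. w)"
      using sum_strict_mono_ex1[of C s "\<lambda>_. w"] fins sW by blast
    then show False using sumge p_c_w_def by simp
  qed
  have SW: "\<And>x. x \<in> C \<Longrightarrow> S x = W"
    using allw card_subset_eq[OF fins(6) subs(7)] unfolding s_def p_c_w_def by metis
  have P0: "P = {}" and Q0: "Q = {}" using p0 pq fins unfolding p_c_w_def by auto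
  have XC: "X = C" "Y = C" using P0 Q0 unfolding defs by auto
  have f1: "\<And>x. x \<in> C \<Longrightarrow> E u x" "\<And>x. x \<in> C \<Longrightarrow> E v x" using XC unfolding X_def Y_def by auto
  have f2: "\<And>x. x \<in> V \<Longrightarrow> E u x \<Longrightarrow> x \<in> C" using XC nE unfolding X_def by auto
  have f3: "\<And>x. x \<in> V \<Longrightarrow> E v x \<Longrightarrow> x \<in> C" using XC nE sym unfolding Y_def by auto
  have f4: "\<And>x y. x \<in> C \<Longrightarrow> y \<in> W \<Longrightarrow> E x y" using SW unfolding S_def by auto
  have f5: "\<And>x y. x \<in> W \<Longrightarrow> y \<in> W \<Longrightarrow> \<not> E x y" 
  proof
    fix x y assume "x \<in> W" "y \<in> W" "E x y"
    then have "(x,y) \<in> A2 \<inter> W \<times> W" using subs(6) unfolding A2_def by auto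
    then show False using AW0 by blast
  qed
  have f6: "\<And>x y. x \<in> C \<Longrightarrow> y \<in> C \<Longrightarrow> \<not> E x y" using crossXY CX irr by blast
  have f7: "\<And>x. x \<in> V \<Longrightarrow> x = u \<or> x = v \<or> x \<in> C \<or> x \<in> W" using XC unfolding W_def by auto
  have f8: "u \<notin> C" "v \<notin> C" "C \<inter> W = {}" using notin CX unfolding W_def by auto
  have key: "\<forall>a\<in>V. \<forall>b\<in>V. E a b \<longleftrightarrow> (a \<in> C) \<noteq> (b \<in> C)"
  proof (intro ballI)
    fix a b assume a: "a \<in> V" and b: "b \<in> V"
    have d2: "E x y" if x: "x \<in> C" and y: "y \<in> V" "y \<notin> C" for x y
    proof -
      have "y = u \<or> y = v \<or> y \<in> W" using f7[OF y(1)] y(2) by blast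
      then show ?thesis using f1[OF x] f4[OF x] sym by blast
    qed
    have d1: "\<not> E x y" if x: "x \<in> V" "x \<notin> C" and y: "y \<in> V" "y \<notin> C" for x y
    proof
      assume e: "E x y"
      have "x = u \<or> x = v \<or> x \<in> W" using f7[OF x(1)] x(2) by blast
      moreover have "y = u \<or> y = v \<or> y \<in> W" using f7[OF y(1)] y(2) by blast
      moreover have "\<not> E x u" using f2[OF x(1)] x(2) sym by blast
      moreover have "\<not> E x v" using f3[OF x(1)] x(2) sym by blast
      moreover have "\<not> E u y" using f2[OF y(1)] y(2) by blast
      moreover have "\<not> E v y" using f3[OF y(1)] y(2) by blast
      ultimately show False using f5 e by blast
    qed
    show "E a b \<longleftrightarrow> (a \<in> C) \<noteq> (b \<in> C)"
    proof (cases "a \<in> C"; cases "b \<in> C")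
      assume "a \<in> C" "b \<in> C" then show ?thesis using f6 by blast
    next
      assume "a \<in> C" "b \<notin> C" then show ?thesis using d2 b by blast
    next
      assume "a \<notin> C" "b \<in> C" then show ?thesis using d2 a sym by blast
    next
      assume "a \<notin> C" "b \<notin> C" then show ?thesis using d1 a b by blast
    qed
  qed
  have "graph_iso V E (Kbip_V n (n+1)) Kbip_E"
  proof (rule iso_lemma[OF finV subs(3) _ _ key])
    show "card (V - C) = n" using card_Diff_subset[OF fins(3) subs(3)] cV c1' p_c_w_def by simp
    show "card C = n + 1" using c1' p_c_w_def by simp
  qed
  then show ?thesis using b1 by simp
qed

end



theorem lemma2p2:
  fixes V :: "'a set" and E :: "'a \<Rightarrow> 'a \<Rightarrow> bool" and n \<beta> :: nat
  assumes "n \<ge> 2"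
    and "simple_graph V E"
    and "card V = 2 * n + 1"
    and "card (edge_set V E) \<ge> n ^ 2 + n"
    and "\<forall>a\<in>V. \<forall>b\<in>V. a \<noteq> b \<and> degree V E a = degree V E b \<longrightarrow> \<not> path3 E a b"
    and "\<exists>a\<in>V. \<exists>b\<in>V. a \<noteq> b \<and> degree V E a = \<beta> \<and> degree V E b = \<beta>"
    and "\<forall>d. (\<exists>a\<in>V. \<exists>b\<in>V. a \<noteq> b \<and> degree V E a = d \<and> degree V E b = d) \<longrightarrow> d \<le> \<beta>"
  shows "\<beta> \<le> n + 1 \<and> (\<beta> = n + 1 \<longrightarrow> graph_iso V E (Kbip_V n (n + 1)) Kbip_E)"
proof (cases "\<beta> \<le> n")
  case True
  then show ?thesis by simp
next
  case False
  then have bge: "\<beta> \<ge> n + 1" by simp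
  note G = assms(2)
  obtain u v where uvb: "u \<in> V" "v \<in> V" "u \<noteq> v" "degree V E u = \<beta>" "degree V E v = \<beta>"
    using assms(6) by blast
  have noP3: "\<And>a b. a\<in>V \<Longrightarrow> b\<in>V \<Longrightarrow> a\<noteq>b \<Longrightarrow> degree V E a = degree V E b \<Longrightarrow> \<not> path3 E a b"
    using assms(5) by blast
  have F: "\<And>x y. E x y \<Longrightarrow> E y x" "\<And>x. \<not> E x x" using G unfolding simple_graph_def by blast+
  have cross: "\<And>x y. E u x \<Longrightarrow> x \<noteq> v \<Longrightarrow> E v y \<Longrightarrow> y \<noteq> u \<Longrightarrow> x \<noteq> y \<Longrightarrow> \<not> E x y"
  proof
    fix x y assume h: "E u x" "x \<noteq> v" "E v y" "y \<noteq> u" "x \<noteq> y" "E x y"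
    have "path3 E u v" unfolding path3_def
    proof (intro exI conjI)
      show "distinct [u, x, y, v]" using h uvb F by auto
      show "E y v" using h F by blast
    qed (use h in auto)
    then show False using noP3[OF uvb(1,2,3)] uvb by simp
  qed
  interpret pairsetup V E u v using G uvb cross by unfold_locales auto
  have cE: "2*(n^2+n) \<le> card A2"
  proof -
    have "2*(n^2+n) \<le> 2*card (edge_set V E)" using assms(4) by simp
    then show ?thesis using handshake[OF G] unfolding A2_def by simp
  qed
  have du: "card X + (if E u v then 1 else 0) = \<beta>" using uvb(4) cardNu unfolding degree_def by linarith
  have dv: "card Y + (if E u v then 1 else 0) = \<beta>" using uvb(5) cardNv unfolding degree_def by linarith
  show ?thesis
  proof (cases "E u v")
    case True
    have d1: "card X + 1 = \<beta>" using du True by simp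
    have d2: "card Y + 1 = \<beta>" using dv True by simp
    show ?thesis using adj[OF True assms(1,3) cE d1 d2 bge noP3] by blast
  next
    case False
    have d1: "card X = \<beta>" using du False by simp
    have d2: "card Y = \<beta>" using dv False by simp
    have "\<beta> = n+1 \<and> graph_iso V E (Kbip_V n (n+1)) Kbip_E"
      using nonadj[OF False assms(1,3) cE d1 d2 bge noP3] by blast
    then show ?thesis by simp
  qed
qed


end
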